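(* Let $\Omega\subseteq\mathbb{R}^d$ be a nonempty open convex set and let $F:\Omega\to\mathbb{R}$ be a function of Legendre type, with Bregman divergence $D_F$. Then for every $q\in\Omega$ and every $r\ge 0$, both the primal Bregman ball $B_F(q;r)=\{y\in\Omega: D_F(q\|y)\le r\}$ and the dual Bregman ball $B'_F(q;r)=\{y\in\Omega: D_F(y\|q)\le r\}$ are connected subsets of $\mathbb{R}^d$.
   Context: A function $F:\Omega\to\mathbb{R}$ on a nonempty open convex set $\Omega\subseteq\mathbb{R}^d$ is of Legendre type if (I) it is differentiable, (II) it is strictly convex, and (III) if the boundary $\partial\Omega$ is nonempty, then $\|\nabla F(x)\|\to\infty$ as $x\to\partial\Omega$. The Bregman divergence generated by $F$ is $D_F:\Omega\times\Omega\to\mathbb{R}$, $D_F(x\|y)=F(x)-F(y)-\langle\nabla F(y),x-y\rangle$. *)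

theory Defs
  imports "HOL-Analysis.Analysis"
begin

definition strictly_convex_on :: "'a::real_vector set \<Rightarrow> ('a \<Rightarrow> real) \<Rightarrow> bool" where
  "strictly_convex_on S f \<longleftrightarrow>
     (\<forall>x\<in>S. \<forall>y\<in>S. x \<noteq> y \<longrightarrow> (\<forall>t::real. 0 < t \<and> t < 1 \<longrightarrow>
        f ((1 - t) *\<^sub>R x + t *\<^sub>R y) < (1 - t) * f x + t * f y))"

definition grad :: "('a::euclidean_space \<Rightarrow> real) \<Rightarrow> 'a \<Rightarrow> 'a" where
  "grad F x = (THE g. (F has_derivative (\<lambda>h. g \<bullet> h)) (at x))"

definition legendre_type :: "'a::euclidean_space set \<Rightarrow> ('a \<Rightarrow> real) \<Rightarrow> bool" where
  "legendre_type \<Omega> F \<longleftrightarrow>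
     (\<forall>x\<in>\<Omega>. F differentiable (at x)) \<and>
     strictly_convex_on \<Omega> F \<and>
     (frontier \<Omega> \<noteq> {} \<longrightarrow>
        (\<forall>z\<in>frontier \<Omega>. filterlim (\<lambda>x. norm (grad F x)) at_top (at z within \<Omega>)))"

definition bregman :: "('a::euclidean_space \<Rightarrow> real) \<Rightarrow> 'a \<Rightarrow> 'a \<Rightarrow> real" where
  "bregman F x y = F x - F y - grad F y \<bullet> (x - y)"

end

theory Submission imports Defs begin
lemma lin_rep: "linear (D::'a::euclidean_space\<Rightarrow>real) \<Longrightarrow> D h = (\<Sum>b\<in>Basis. D b *\<^sub>R b) \<bullet> h"
proof -
  assume L: "linear D"
  have "D h = D (\<Sum>b\<in>Basis. (h \<bullet> b) *\<^sub>R b)" by (simp add: euclidean_representation)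
  also have "\<dots> = (\<Sum>b\<in>Basis. (h \<bullet> b) * D b)"
    using L by (simp add: linear_sum linear_scale)
  also have "\<dots> = (\<Sum>b\<in>Basis. D b *\<^sub>R b) \<bullet> h"
    by (simp add: inner_sum_left) (auto intro!: sum.cong simp: inner_commute)
  finally show ?thesis .
qed

lemma grad_deriv:
  assumes "F differentiable (at x)"
  shows "(F has_derivative (\<lambda>h. grad F x \<bullet> h)) (at x)"
proof -
  obtain D where D: "(F has_derivative D) (at x)" using assms unfolding differentiable_def by blast
  define g where "g = (\<Sum>b\<in>Basis. D b *\<^sub>R b)"
  have Dh: "\<And>h. D h = g \<bullet> h" unfolding g_def by (rule lin_rep[OF has_derivative_linear[OF D]])
  have "D = (\<lambda>h. g \<bullet> h)" using Dh by (rule ext)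
  with D have Dg: "(F has_derivative (\<lambda>h. g \<bullet> h)) (at x)" by simp
  have "\<And>g'. (F has_derivative (\<lambda>h. g' \<bullet> h)) (at x) \<Longrightarrow> g' = g"
  proof -
    fix g' assume "(F has_derivative (\<lambda>h. g' \<bullet> h)) (at x)"
    then have "(\<lambda>h. g' \<bullet> h) = (\<lambda>h. g \<bullet> h)" using has_derivative_unique Dg by blast
    then have "g' \<bullet> (g' - g) = g \<bullet> (g' - g)" by meson
    then have "(g' - g) \<bullet> (g' - g) = 0" by (simp add: inner_diff_left)
    then show "g' = g" by simp
  qed
  then have "grad F x = g" unfolding grad_def using Dg by (rule the_equality[rotated])
  then show ?thesis using Dg by simp
qed

lemma sc_convex:
  assumes "strictly_convex_on S F" "convex S"
  shows "convex_on S F"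
proof (rule convex_onI[OF _ assms(2)])
  fix t x y assume "(0::real) < t" "t < 1" "x \<in> S" "y \<in> S"
  then show "F ((1 - t) *\<^sub>R x + t *\<^sub>R y) \<le> (1 - t) * F x + t * F y"
  proof (cases "x = y")
    case True
    then show ?thesis by (simp add: scaleR_collapse) (simp add: algebra_simps)
  next
    case False
    have "F ((1 - t) *\<^sub>R x + t *\<^sub>R y) < (1 - t) * F x + t * F y"
      using assms(1) False \<open>0 < t\<close> \<open>t < 1\<close> \<open>x \<in> S\<close> \<open>y \<in> S\<close>
      unfolding strictly_convex_on_def by blast
    then show ?thesis by simp
  qed
qed

lemma tangent:
  fixes F :: "'a::euclidean_space \<Rightarrow> real"
  assumes "open S" "convex_on S F" "x \<in> S" "y \<in> S" "F differentiable (at x)"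
  shows "F y \<ge> F x + grad F x \<bullet> (y - x)"
proof -
  define A where "A = {t::real. x + t *\<^sub>R (y - x) \<in> S}"
  define h where "h = (\<lambda>t::real. F (x + t *\<^sub>R (y - x)))"
  have cS: "convex S" using assms(2) convex_on_def by blast
  have "A = (\<lambda>t. x + t *\<^sub>R (y - x)) -` S" by (auto simp: A_def)
  then have oA: "open A"
    by (auto intro!: open_vimage[OF assms(1)] continuous_intros)
  have cA: "convex A" unfolding A_def convex_def
  proof (intro allI impI ballI, clarsimp)
    fix a b u v :: real assume "x + a *\<^sub>R (y - x) \<in> S" "x + b *\<^sub>R (y - x) \<in> S" "0 \<le> u" "0 \<le> v" "u + v = 1"
    then have "u *\<^sub>R (x + a *\<^sub>R (y - x)) + v *\<^sub>R (x + b *\<^sub>R (y - x)) \<in> S"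
      using cS unfolding convex_def by blast
    moreover have "u *\<^sub>R (x + a *\<^sub>R (y - x)) + v *\<^sub>R (x + b *\<^sub>R (y - x)) = x + (u * a + v * b) *\<^sub>R (y - x)"
    proof -
      have "v = 1 - u" using \<open>u + v = 1\<close> by simp
      then show ?thesis by (simp only:) (simp add: algebra_simps)
    qed
    ultimately show "x + (u * a + v * b) *\<^sub>R (y - x) \<in> S" by simp
  qed
  have hA: "convex_on A h"
  proof (rule convex_onI[OF _ cA])
    fix t a b :: real assume "0 < t" "t < 1" "a \<in> A" "b \<in> A"
    then have "F ((1 - t) *\<^sub>R (x + a *\<^sub>R (y - x)) + t *\<^sub>R (x + b *\<^sub>R (y - x))) \<le> (1 - t) * h a + t * h b"
      using convex_onD[OF assms(2)] unfolding A_def h_def by simp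
    moreover have "(1 - t) *\<^sub>R (x + a *\<^sub>R (y - x)) + t *\<^sub>R (x + b *\<^sub>R (y - x)) = x + ((1 - t) * a + t * b) *\<^sub>R (y - x)"
      by (simp add: algebra_simps)
    ultimately show "h ((1 - t) *\<^sub>R a + t *\<^sub>R b) \<le> (1 - t) * h a + t * h b"
      unfolding h_def by simp
  qed
  have 0: "0 \<in> A" "1 \<in> A" using assms(3,4) by (auto simp: A_def)
  have "((\<lambda>t::real. x + t *\<^sub>R (y - x)) has_derivative (\<lambda>t. t *\<^sub>R (y - x))) (at 0)"
    by (auto intro!: derivative_eq_intros)
  from has_derivative_compose[OF this, of F "\<lambda>h. grad F x \<bullet> h"]
  have "(h has_derivative (\<lambda>t. grad F x \<bullet> (t *\<^sub>R (y - x)))) (at 0)"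
    using grad_deriv[OF assms(5)] unfolding h_def by simp
  then have "(h has_field_derivative (grad F x \<bullet> (y - x))) (at 0)"
    unfolding has_field_derivative_def by (simp add: mult.commute[of _ "grad F x \<bullet> (y - x)"])
  then have hd: "(h has_field_derivative (grad F x \<bullet> (y - x))) (at 0 within A)"
    by (rule has_field_derivative_at_within)
  have i0: "0 \<in> interior A" using 0 oA by (simp add: interior_open)
  from convex_on_imp_above_tangent[OF hA convex_connected[OF cA] i0 0(2) hd]
  have "h 1 - h 0 \<ge> grad F x \<bullet> (y - x) * (1 - 0)" .
  moreover have "h 1 = F y" "h 0 = F x" unfolding h_def by simp_all
  ultimately show ?thesis by simp
qed

lemma key_ineq:
  fixes Fy Fz A B s :: real
  assumes "Fz \<ge> Fy + (1 - s) * A" "Fy \<ge> Fz - (1 - s) * B" "0 \<le> s" "s < 1"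
  shows "Fy + A \<le> Fz + s * B"
proof -
  have "(1 - s) * (A - B) \<le> 0" using assms(1,2) by (simp add: algebra_simps)
  then have "A \<le> B" using assms(4) by (simp add: mult_le_0_iff)
  then have "s * A \<le> s * B" using assms(3) by (simp add: mult_left_mono)
  then show ?thesis using assms(1) by (simp add: algebra_simps)
qed

theorem lemma2:
  fixes \<Omega> :: "'a::euclidean_space set" and F :: "'a \<Rightarrow> real" and q :: 'a and r :: real
  assumes "open \<Omega>" and "convex \<Omega>" and "\<Omega> \<noteq> {}"
    and "legendre_type \<Omega> F"
    and "q \<in> \<Omega>" and "r \<ge> 0"
  shows "connected {y \<in> \<Omega>. bregman F q y \<le> r} \<and> connected {y \<in> \<Omega>. bregman F y q \<le> r}"
proof
  have diff: "\<And>x. x \<in> \<Omega> \<Longrightarrow> F differentiable (at x)" using assms(4) legendre_type_def by blast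
  have cF: "convex_on \<Omega> F" using assms(4) sc_convex[OF _ assms(2)] legendre_type_def by blast
  have tan: "\<And>x y. x \<in> \<Omega> \<Longrightarrow> y \<in> \<Omega> \<Longrightarrow> F y \<ge> F x + grad F x \<bullet> (y - x)"
    using tangent[OF assms(1) cF] diff by blast
  show "connected {y \<in> \<Omega>. bregman F q y \<le> r}"
  proof (rule starlike_imp_connected, unfold starlike_def, intro bexI ballI subsetI)
    show "q \<in> {y \<in> \<Omega>. bregman F q y \<le> r}" using assms(5,6) by (simp add: bregman_def)
    fix y z assume y: "y \<in> {y \<in> \<Omega>. bregman F q y \<le> r}" and z: "z \<in> closed_segment q y"
    from z obtain s where s: "0 \<le> s" "s \<le> 1" and zdef: "z = (1 - s) *\<^sub>R q + s *\<^sub>R y"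
      unfolding closed_segment_def by blast
    have yO: "y \<in> \<Omega>" using y by simp
    have zO: "z \<in> \<Omega>" using z assms(2,5) yO by (meson closed_segment_subset subsetD)
    show "z \<in> {y \<in> \<Omega>. bregman F q y \<le> r}"
    proof (cases "s = 1")
      case True
      then show ?thesis using zdef y by simp
    next
      case False
      then have s1: "s < 1" using s by simp
      define w where "w = q - y"
      have zy: "z - y = (1 - s) *\<^sub>R w" unfolding zdef w_def by (simp add: algebra_simps)
      have yz: "y - z = - ((1 - s) *\<^sub>R w)" unfolding zdef w_def by (simp add: algebra_simps)
      have qz: "q - z = s *\<^sub>R w" unfolding zdef w_def by (simp add: algebra_simps)
      have T1: "F z \<ge> F y + (1 - s) * (grad F y \<bullet> w)" using tan[OF yO zO] zy by simp
      have T2: "F y \<ge> F z - (1 - s) * (grad F z \<bullet> w)" using tan[OF zO yO] yz by simp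
      have "F y + grad F y \<bullet> w \<le> F z + s * (grad F z \<bullet> w)"
        by (rule key_ineq[OF T1 T2 s(1) s1])
      then have "bregman F q z \<le> bregman F q y"
        unfolding bregman_def qz w_def by simp
      then show ?thesis using y zO by simp
    qed
  qed
  show "connected {y \<in> \<Omega>. bregman F y q \<le> r}"
  proof (rule convex_connected, unfold convex_def, intro ballI allI impI)
    fix a b :: 'a and u v :: real
    assume a: "a \<in> {y \<in> \<Omega>. bregman F y q \<le> r}" and b: "b \<in> {y \<in> \<Omega>. bregman F y q \<le> r}"
      and uv: "0 \<le> u" "0 \<le> v" "u + v = 1"
    let ?z = "u *\<^sub>R a + v *\<^sub>R b"
    let ?g = "grad F q"
    have aO: "a \<in> \<Omega>" and bO: "b \<in> \<Omega>" using a b by auto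
    have zO: "?z \<in> \<Omega>" using convexD[OF assms(2) aO bO uv] .
    have v: "v = 1 - u" and u: "u = 1 - v" using uv by simp_all
    have "v \<le> 1" using uv by simp
    from convex_onD[OF cF uv(2) this aO bO]
    have Fz: "F ?z \<le> u * F a + v * F b" unfolding u[symmetric] .
    have lin: "?g \<bullet> (?z - q) = u * (?g \<bullet> (a - q)) + v * (?g \<bullet> (b - q))"
      unfolding v by (simp add: algebra_simps inner_diff_right inner_add_right)
    have "bregman F ?z q \<le> u * bregman F a q + v * bregman F b q"
    proof -
      have e: "u * F q + v * F q = F q" using uv(3) by (metis distrib_right mult_1)
      have ex: "u * (F a - F q - ?g \<bullet> (a - q)) + v * (F b - F q - ?g \<bullet> (b - q))
        = u * F a - u * F q - u * (?g \<bullet> (a - q)) + v * F b - v * F q - v * (?g \<bullet> (b - q))"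
        by (simp add: algebra_simps)
      show ?thesis unfolding bregman_def lin ex using Fz e by linarith
    qed
    also have "\<dots> \<le> u * r + v * r"
      using a b uv by (intro add_mono mult_left_mono) auto
    also have "\<dots> = r" using uv by (simp flip: distrib_right)
    finally show "?z \<in> {y \<in> \<Omega>. bregman F y q \<le> r}" using zO by simp
  qed
qed

end
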